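(* Assume $X_t>0$ for all $t\in\mathcal T$ and let $\alpha=\sum_tY_t/X_t$. Then $\max_{\delta\in[0,1]}\delta\big(1-\frac{\delta}{2}\alpha\big)=L(\alpha)$, attained at $\delta=\min\{1/\alpha,1\}$. Consequently, in the weakest-link game, any strategy $F^*_{\mathcal X}\in\mathbb F(\boldsymbol X)$ whose $c$-marginals are, for all $c$ and $\boldsymbol u\in\mathbb R^T_{\ge0}$, $F^*_{\mathcal X,c}(\boldsymbol u)=\min_t\min\{\frac{u_t}{2v_cX_t},1\}$ if $\alpha\le1$, and $F^*_{\mathcal X,c}(\boldsymbol u)=1-\frac1\alpha+\frac1\alpha\min_t\min\{\frac{u_t}{2v_cX_t\alpha},1\}$ if $\alpha>1$, satisfies $\pi_{\mathcal X}(F^*_{\mathcal X},F_{\mathcal Y})\ge L(\alpha)$ for every $F_{\mathcal Y}\in\mathbb F(\boldsymbol Y)$.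
   Context: Contests $\mathcal C=\{1,\dots,C\}$ with values $v_c>0$, $\sum_cv_c=1$; types $\mathcal T=\{1,\dots,T\}$; $\boldsymbol Y\in\mathbb R^T_{\ge0}$. $\mathbb F(\boldsymbol X)$ is the set of probability distributions $F$ on $\mathbb R^{CT}_{\ge0}$ (points $\mathbf x=(\boldsymbol x_c)_c$, $\boldsymbol x_c=(x_{c,t})_t$) with $\mathbb E_{\mathbf x\sim F}[\sum_cx_{c,t}]\le X_t$ for all $t$; similarly $\mathbb F(\boldsymbol Y)$. $c$-marginal: $F_c(\boldsymbol u)=\mathbb P_{\mathbf x\sim F}[x_{c,t}\le u_t\ \forall t]$. Weakest-link rule $W_{\mathrm{WL}}(\boldsymbol x,\boldsymbol y)=\mathbf 1\{x_t\ge y_t\ \forall t\}$; $\pi_{\mathcal X}(F_{\mathcal X},F_{\mathcal Y})=\mathbb E[\sum_cv_cW_{\mathrm{WL}}(\boldsymbol x_c,\boldsymbol y_c)]$ with independent $\mathbf x\sim F_{\mathcal X}$, $\mathbf y\sim F_{\mathcal Y}$. $L(\alpha)=1-\alpha/2$ for $\alpha\le1$, $L(\alpha)=1/(2\alpha)$ for $\alpha>1$. *)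

theory Defs
  imports "HOL-Probability.Probability"
begin

text \<open>Contests are the elements of a finite type 'c, resource types the elements of a
finite type 't. A pure allocation is a point x :: 'c => 't => real, x c t = x_{c,t}.\<close>

definition alloc_space :: "('c::finite \<Rightarrow> 't::finite \<Rightarrow> real) measure" where
  "alloc_space = (\<Pi>\<^sub>M c\<in>UNIV. \<Pi>\<^sub>M t\<in>UNIV. (borel :: real measure))"

definition strategies :: "('t::finite \<Rightarrow> real) \<Rightarrow> ('c::finite \<Rightarrow> 't \<Rightarrow> real) measure set" where
  "strategies B = {F. prob_space F \<and> sets F = sets alloc_space
      \<and> (AE x in F. \<forall>c t. 0 \<le> x c t)
      \<and> (\<forall>t. (\<integral>\<^sup>+ x. ennreal (\<Sum>c\<in>UNIV. x c t) \<partial>F) \<le> ennreal (B t))}"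

definition marginal :: "('c::finite \<Rightarrow> 't::finite \<Rightarrow> real) measure \<Rightarrow> 'c \<Rightarrow> ('t \<Rightarrow> real) \<Rightarrow> real" where
  "marginal F c u = measure F {x \<in> space F. \<forall>t. x c t \<le> u t}"

definition W_WL :: "('t \<Rightarrow> real) \<Rightarrow> ('t \<Rightarrow> real) \<Rightarrow> real" where
  "W_WL x y = (if \<forall>t. y t \<le> x t then 1 else 0)"

definition payoff_X :: "('c::finite \<Rightarrow> real) \<Rightarrow> ('c \<Rightarrow> 't::finite \<Rightarrow> real) measure
      \<Rightarrow> ('c \<Rightarrow> 't \<Rightarrow> real) measure \<Rightarrow> real" where
  "payoff_X v FX FY = (\<integral> z. (\<Sum>c\<in>UNIV. v c * W_WL (fst z c) (snd z c)) \<partial>(FX \<Otimes>\<^sub>M FY))"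

definition L :: "real \<Rightarrow> real" where
  "L \<alpha> = (if \<alpha> \<le> 1 then 1 - \<alpha> / 2 else 1 / (2 * \<alpha>))"

end

theory Submission
  imports Defs
begin


lemma comp_meas:
  assumes "sets M = sets (alloc_space :: ('c::finite \<Rightarrow> 't::finite \<Rightarrow> real) measure)"
  shows "(\<lambda>x. x c t) \<in> borel_measurable M"
proof -
  have "(\<lambda>x. x c t) \<in> borel_measurable (alloc_space :: ('c \<Rightarrow> 't \<Rightarrow> real) measure)"
    unfolding alloc_space_def
    by (rule measurable_compose[of "\<lambda>x. x c" _ _ "\<lambda>y. y t"]; rule measurable_component_singleton; simp)
  then show ?thesis using measurable_cong_sets[OF assms refl] by blast
qed

lemma winset_meas:
  assumes "sets M = sets (alloc_space :: ('c::finite \<Rightarrow> 't::finite \<Rightarrow> real) measure)"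
  shows "{x\<in>space M. \<forall>t. (y::'t\<Rightarrow>real) t \<le> x c t} \<in> sets M"
proof -
  have [measurable]: "(\<lambda>x. x c t) \<in> borel_measurable M" for t using comp_meas[OF assms] .
  show ?thesis by measurable
qed

lemma payoff_meas:
  assumes "sets M = sets (alloc_space :: ('c::finite \<Rightarrow> 't::finite \<Rightarrow> real) measure)"
   and "sets N = sets (alloc_space :: ('c::finite \<Rightarrow> 't::finite \<Rightarrow> real) measure)"
  shows "(\<lambda>z. \<Sum>c\<in>UNIV. v c * W_WL (fst z c) (snd z c)) \<in> borel_measurable (M \<Otimes>\<^sub>M N)"
proof -
  have [measurable]: "(\<lambda>x. x c t) \<in> borel_measurable M" for c t using comp_meas[OF assms(1)] .
  have [measurable]: "(\<lambda>x. x c t) \<in> borel_measurable N" for c t using comp_meas[OF assms(2)] .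
  show ?thesis unfolding W_WL_def by measurable
qed


lemma win_bound:
  fixes M :: "('c::finite \<Rightarrow> 't::finite \<Rightarrow> real) measure"
  assumes P: "prob_space M" and S: "sets M = sets (alloc_space :: ('c \<Rightarrow> 't \<Rightarrow> real) measure)"
    and marg: "\<And>u. (\<forall>t. 0 \<le> u t) \<Longrightarrow> marginal M c u = p0 + w * Min (range (\<lambda>t. min (u t / K t) 1))"
    and K: "\<And>t. K t > 0" and w: "w \<ge> 0" and pw: "p0 + w = 1"
    and y: "\<And>t. y t \<ge> 0"
  shows "measure M {x\<in>space M. \<forall>t. y t \<le> x c t} \<ge> 1 - p0 - w * (\<Sum>t\<in>UNIV. y t / K t)"
proof -
  interpret prob_space M by fact
  have [measurable]: "(\<lambda>x. x c t) \<in> borel_measurable M" for t using comp_meas[OF S] .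
  define Sw where "Sw = {x\<in>space M. \<forall>t. y t \<le> x c t}"
  define A where "A = {x\<in>space M. \<forall>s. x c s \<le> 0}"
  define B where "B t = {x\<in>space M. x c t \<le> y t}" for t
  define Mb where "Mb = (\<Sum>s\<in>UNIV. K s)"
  define C where "C = {x\<in>space M. \<forall>s. x c s \<le> Mb}"
  have [measurable]: "Sw \<in> sets M" "A \<in> sets M" "B t \<in> sets M" "C \<in> sets M" for t
    unfolding Sw_def A_def B_def C_def by measurable
  have Kle: "K s \<le> Mb" for s unfolding Mb_def
    by (rule member_le_sum) (use K in \<open>auto intro: less_imp_le\<close>)
  have Mbpos: "Mb > 0" using Kle[of undefined] K[of undefined] by linarith
  have pA: "prob A = p0"
  proof -
    have "prob A = marginal M c (\<lambda>_. 0)" unfolding A_def marginal_def by simp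
    also have "\<dots> = p0" using marg[of "\<lambda>_. 0"] by simp
    finally show ?thesis .
  qed
  have pC: "prob C = 1"
  proof -
    have "prob C = marginal M c (\<lambda>_. Mb)" unfolding C_def marginal_def by simp
    also have "\<dots> = p0 + w * Min (range (\<lambda>t. min (Mb / K t) 1))" using marg[of "\<lambda>_. Mb"] Mbpos by simp
    also have "(\<lambda>t. min (Mb / K t) 1) = (\<lambda>_. 1)"
    proof
      fix t show "min (Mb / K t) 1 = 1" using Kle[of t] K[of t] by (simp add: min_def field_simps)
    qed
    finally show ?thesis using pw by simp
  qed
  have pB: "prob (B t) \<le> p0 + w * (y t / K t)" for t
  proof -
    define u where "u = (\<lambda>s. if s = t then y t else Mb)"
    have u0: "\<forall>s. 0 \<le> u s" using y Mbpos by (auto simp: u_def)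
    have "B t \<subseteq> {x\<in>space M. \<forall>s. x c s \<le> u s} \<union> (space M - C)"
      unfolding B_def C_def u_def by auto
    then have "prob (B t) \<le> prob ({x\<in>space M. \<forall>s. x c s \<le> u s} \<union> (space M - C))"
      by (intro finite_measure_mono) measurable
    also have "\<dots> \<le> prob {x\<in>space M. \<forall>s. x c s \<le> u s} + prob (space M - C)"
      by (intro measure_Un_le) measurable
    also have "prob (space M - C) = 0" using pC by (simp add: prob_compl)
    also have "prob {x\<in>space M. \<forall>s. x c s \<le> u s} = marginal M c u" unfolding marginal_def ..
    also have "\<dots> = p0 + w * Min (range (\<lambda>s. min (u s / K s) 1))" using marg u0 by blast
    also have "Min (range (\<lambda>s. min (u s / K s) 1)) \<le> min (u t / K t) 1"
      by (rule Min_le) auto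
    also have "min (u t / K t) 1 \<le> y t / K t" by (simp add: u_def)
    finally show ?thesis using w by (simp add: mult_left_mono)
  qed
  have sub: "space M - Sw \<subseteq> A \<union> (\<Union>t. B t - A)"
    unfolding Sw_def A_def B_def by (auto simp: not_le) (meson less_le_not_le)
  have "prob (space M - Sw) \<le> prob (A \<union> (\<Union>t. B t - A))"
    using sub by (intro finite_measure_mono) measurable
  also have "\<dots> \<le> prob A + prob (\<Union>t. B t - A)"
    by (intro measure_Un_le) measurable
  also have "prob (\<Union>t. B t - A) \<le> (\<Sum>t\<in>UNIV. prob (B t - A))"
    by (intro finite_measure_subadditive_finite) auto
  also have "(\<Sum>t\<in>UNIV. prob (B t - A)) = (\<Sum>t\<in>UNIV. prob (B t) - p0)"
  proof (rule sum.cong[OF refl])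
    fix t
    have "A \<subseteq> B t" unfolding A_def B_def using y by (auto intro: order_trans)
    then show "prob (B t - A) = prob (B t) - p0"
      using pA by (subst finite_measure_Diff) auto
  qed
  also have "\<dots> \<le> (\<Sum>t\<in>UNIV. w * (y t / K t))"
    using pB by (intro sum_mono) (smt (verit))
  finally have "prob (space M - Sw) \<le> p0 + w * (\<Sum>t\<in>UNIV. y t / K t)"
    using pA by (simp add: sum_distrib_left)
  moreover have "prob (space M - Sw) = 1 - prob Sw" by (simp add: prob_compl)
  ultimately show ?thesis unfolding Sw_def by simp
qed


lemma budget:
  fixes N :: "('c::finite \<Rightarrow> 't::finite \<Rightarrow> real) measure"
  assumes P: "prob_space N" and S: "sets N = sets (alloc_space :: ('c \<Rightarrow> 't \<Rightarrow> real) measure)"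
    and nn: "AE y in N. \<forall>c t. 0 \<le> y c t"
    and b: "(\<integral>\<^sup>+ y. ennreal (\<Sum>c\<in>UNIV. y c t) \<partial>N) \<le> ennreal B" and B: "B \<ge> 0"
  shows "integrable N (\<lambda>y. \<Sum>c\<in>UNIV. y c t) \<and> (\<integral>y. (\<Sum>c\<in>UNIV. y c t) \<partial>N) \<le> B"
proof -
  have [measurable]: "(\<lambda>x. x c t) \<in> borel_measurable N" for c t using comp_meas[OF S] .
  have nn2: "AE y in N. 0 \<le> (\<Sum>c\<in>UNIV. y c t)" using nn by eventually_elim (auto intro: sum_nonneg)
  have eq: "(\<integral>\<^sup>+ y. ennreal (norm (\<Sum>c\<in>UNIV. y c t)) \<partial>N) = (\<integral>\<^sup>+ y. ennreal (\<Sum>c\<in>UNIV. y c t) \<partial>N)"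
    using nn2 by (auto intro!: nn_integral_cong_AE elim!: eventually_mono)
  have "integrable N (\<lambda>y. \<Sum>c\<in>UNIV. y c t)"
  proof (rule integrableI_bounded)
    show "(\<integral>\<^sup>+ y. ennreal (norm (\<Sum>c\<in>UNIV. y c t)) \<partial>N) < \<infinity>"
      unfolding eq using le_less_trans[OF b ennreal_less_top[of B]] by (simp add: infinity_ennreal_def)
  qed measurable
  moreover have "(\<integral>y. (\<Sum>c\<in>UNIV. y c t) \<partial>N) = enn2real (\<integral>\<^sup>+ y. ennreal (\<Sum>c\<in>UNIV. y c t) \<partial>N)"
    using nn2 by (intro integral_eq_nn_integral) auto
  moreover have "enn2real (\<integral>\<^sup>+ y. ennreal (\<Sum>c\<in>UNIV. y c t) \<partial>N) \<le> B"
    by (rule enn2real_leI[OF B b])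
  ultimately show ?thesis by simp
qed

lemma delta_part:
  fixes a :: real assumes a: "a \<ge> 0"
  shows "(let \<delta>0 = (if a \<le> 1 then 1 else 1 / a)
          in (\<forall>\<delta>\<in>{0..1}. \<delta> * (1 - \<delta> / 2 * a) \<le> L a)
             \<and> \<delta>0 \<in> {0..1} \<and> \<delta>0 * (1 - \<delta>0 / 2 * a) = L a)"
proof (cases "a \<le> 1")
  case True
  have "\<delta> * (1 - \<delta> / 2 * a) \<le> 1 - a / 2" if "\<delta> \<in> {0..1}" for \<delta>
  proof -
    have "a * (1 + \<delta>) \<le> 1 * 2" using that True a by (intro mult_mono) auto
    then have "(1 - \<delta>) * (1 - a * (1 + \<delta>) / 2) \<ge> 0"
      using that by (intro mult_nonneg_nonneg) auto
    moreover have "(1 - \<delta>) * (1 - a * (1 + \<delta>) / 2) = (1 - a / 2) - \<delta> * (1 - \<delta> / 2 * a)"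
      by (simp add: field_simps)
    ultimately show ?thesis by linarith
  qed
  then show ?thesis using True by (simp add: L_def Let_def)
next
  case False
  have "\<delta> * (1 - \<delta> / 2 * a) \<le> 1 / (2 * a)" if "\<delta> \<in> {0..1}" for \<delta>
  proof -
    have "(a * \<delta> - 1)^2 / (2 * a) \<ge> 0" using False by simp
    moreover have "(a * \<delta> - 1)^2 / (2 * a) = 1 / (2 * a) - \<delta> * (1 - \<delta> / 2 * a)"
      using False by (simp add: field_simps power2_eq_square)
    ultimately show ?thesis by linarith
  qed
  then show ?thesis using False by (simp add: L_def Let_def field_simps)
qed


theorem lemma6:
  fixes v :: "'c::finite \<Rightarrow> real" and X Y :: "'t::finite \<Rightarrow> real"
    and FX FY :: "('c \<Rightarrow> 't \<Rightarrow> real) measure"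
  assumes v_pos: "\<And>c. v c > 0" and v_sum: "(\<Sum>c\<in>UNIV. v c) = 1"
    and X_pos: "\<And>t. X t > 0" and Y_nonneg: "\<And>t. Y t \<ge> 0"
    and FX: "FX \<in> strategies X"
    and FX_marg: "\<And>c u. (\<forall>t. 0 \<le> u t) \<Longrightarrow>
       marginal FX c u =
         (if (\<Sum>t\<in>UNIV. Y t / X t) \<le> 1
          then Min (range (\<lambda>t. min (u t / (2 * v c * X t)) 1))
          else 1 - 1 / (\<Sum>t\<in>UNIV. Y t / X t) + 1 / (\<Sum>t\<in>UNIV. Y t / X t) *
                 Min (range (\<lambda>t. min (u t / (2 * v c * X t * (\<Sum>t\<in>UNIV. Y t / X t))) 1)))"
    and FY: "FY \<in> strategies Y"
  shows "(let \<alpha> = (\<Sum>t\<in>UNIV. Y t / X t);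
              \<delta>0 = (if \<alpha> \<le> 1 then 1 else 1 / \<alpha>)
          in (\<forall>\<delta>\<in>{0..1}. \<delta> * (1 - \<delta> / 2 * \<alpha>) \<le> L \<alpha>)
             \<and> \<delta>0 \<in> {0..1} \<and> \<delta>0 * (1 - \<delta>0 / 2 * \<alpha>) = L \<alpha>
             \<and> payoff_X v FX FY \<ge> L \<alpha>)"
proof -
  define \<alpha> where "\<alpha> = (\<Sum>t\<in>UNIV. Y t / X t)"
  have a0: "\<alpha> \<ge> 0" unfolding \<alpha>_def using X_pos Y_nonneg by (intro sum_nonneg) (simp add: less_imp_le)
  define p0 where "p0 = (if \<alpha> \<le> 1 then 0 else 1 - 1 / \<alpha>)"
  define w where "w = (if \<alpha> \<le> 1 then 1 else 1 / \<alpha>)"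
  define \<beta> where "\<beta> = (if \<alpha> \<le> 1 then 1 else \<alpha>)"
  have w0: "w \<ge> 0" and pw: "p0 + w = 1" and b0: "\<beta> > 0"
    using a0 by (auto simp: w_def p0_def \<beta>_def)
  have margX: "marginal FX c u = p0 + w * Min (range (\<lambda>t. min (u t / (2 * v c * X t * \<beta>)) 1))"
    if "\<forall>t. 0 \<le> u t" for c u
    using FX_marg[OF that] unfolding \<alpha>_def[symmetric] by (simp add: p0_def w_def \<beta>_def)
  have PX: "prob_space FX" and SX: "sets FX = sets alloc_space"
    using FX by (auto simp: strategies_def)
  have PY: "prob_space FY" and SY: "sets FY = sets alloc_space"
    and nnY: "AE y in FY. \<forall>c t. 0 \<le> y c t"
    and bY: "\<And>t. (\<integral>\<^sup>+ y. ennreal (\<Sum>c\<in>UNIV. y c t) \<partial>FY) \<le> ennreal (Y t)"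
    using FY by (auto simp: strategies_def)
  interpret PX: prob_space FX by fact
  interpret PY: prob_space FY by fact
  interpret PP: pair_prob_space FX FY by unfold_locales
  have [measurable]: "(\<lambda>x. x c t) \<in> borel_measurable FX" for c t using comp_meas[OF SX] .
  have [measurable]: "(\<lambda>x. x c t) \<in> borel_measurable FY" for c t using comp_meas[OF SY] .
  define f where "f x y = (\<Sum>c\<in>UNIV. v c * W_WL (x c) (y c))" for x y :: "'c \<Rightarrow> 't \<Rightarrow> real"
  have fm: "case_prod f \<in> borel_measurable (FX \<Otimes>\<^sub>M FY)"
    using payoff_meas[OF SX SY, of v] by (simp add: f_def split_beta')
  have Wb: "0 \<le> W_WL a b" "W_WL a b \<le> 1" for a b by (auto simp: W_WL_def)
  have fb: "norm (f x y) \<le> 1" for x y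
  proof -
    have "0 \<le> f x y" unfolding f_def using less_imp_le[OF v_pos] Wb by (intro sum_nonneg mult_nonneg_nonneg) auto
    moreover have "f x y \<le> (\<Sum>c\<in>UNIV. v c * 1)" unfolding f_def
      using v_pos Wb by (intro sum_mono mult_left_mono) (auto simp: less_imp_le)
    ultimately show ?thesis using v_sum by simp
  qed
  have fint: "integrable (FX \<Otimes>\<^sub>M FY) (case_prod f)"
    by (rule PP.P.integrable_const_bound[where B=1]) (use fb fm in auto)
  have pay: "payoff_X v FX FY = (\<integral>y. (\<integral>x. f x y \<partial>FX) \<partial>FY)"
    unfolding payoff_X_def PP.integral_snd[OF fint] by (simp add: f_def split_beta')
  define s where "s t y = (\<Sum>c\<in>UNIV. y c t)" for t and y :: "'c \<Rightarrow> 't \<Rightarrow> real"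
  have sint: "integrable FY (s t)" and sle: "(\<integral>y. s t y \<partial>FY) \<le> Y t" for t
    using budget[OF PY SY nnY bY Y_nonneg] unfolding s_def by auto
  define h where "h y = (1 - p0) - w * (\<Sum>t\<in>UNIV. s t y / (2 * X t * \<beta>))" for y
  have inner: "h y \<le> (\<integral>x. f x y \<partial>FX)" if y0: "\<forall>c t. 0 \<le> y c t" for y
  proof -
    let ?S = "\<lambda>c. {x\<in>space FX. \<forall>t. y c t \<le> x c t}"
    have Sm: "?S c \<in> sets FX" for c using winset_meas[OF SX] .
    have "(\<integral>x. f x y \<partial>FX) = (\<integral>x. (\<Sum>c\<in>UNIV. v c * indicator (?S c) x) \<partial>FX)"
    proof (rule Bochner_Integration.integral_cong[OF refl])
      fix x assume "x \<in> space FX"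
      then show "f x y = (\<Sum>c\<in>UNIV. v c * indicator (?S c) x)"
        unfolding f_def W_WL_def by (intro sum.cong refl) (simp add: indicator_def)
    qed
    also have "\<dots> = (\<Sum>c\<in>UNIV. v c * PX.prob (?S c))"
    proof -
      have "(\<integral>x. (\<Sum>c\<in>UNIV. v c * indicator (?S c) x) \<partial>FX) = (\<Sum>c\<in>UNIV. (\<integral>x. v c * indicator (?S c) x \<partial>FX))"
        by (rule Bochner_Integration.integral_sum) (use Sm in \<open>auto intro!: integrable_real_indicator simp: PX.emeasure_eq_measure\<close>)
      also have "\<dots> = (\<Sum>c\<in>UNIV. v c * PX.prob (?S c))"
      proof (rule sum.cong[OF refl])
        fix c
        have "?S c \<inter> space FX = ?S c" by auto
        then show "(\<integral>x. v c * indicator (?S c) x \<partial>FX) = v c * PX.prob (?S c)" by simp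
      qed
      finally show ?thesis .
    qed
    finally have eq: "(\<integral>x. f x y \<partial>FX) = (\<Sum>c\<in>UNIV. v c * PX.prob (?S c))" .
    have "(\<Sum>c\<in>UNIV. v c * (1 - p0 - w * (\<Sum>t\<in>UNIV. y c t / (2 * v c * X t * \<beta>))))
          \<le> (\<Sum>c\<in>UNIV. v c * PX.prob (?S c))"
    proof (intro sum_mono mult_left_mono)
      fix c
      show "1 - p0 - w * (\<Sum>t\<in>UNIV. y c t / (2 * v c * X t * \<beta>)) \<le> PX.prob (?S c)"
        by (rule win_bound[OF PX SX margX _ w0 pw]) (use y0 v_pos X_pos b0 in auto)
      show "0 \<le> v c" using v_pos[of c] by simp
    qed
    also have "(\<Sum>c\<in>UNIV. v c * (1 - p0 - w * (\<Sum>t\<in>UNIV. y c t / (2 * v c * X t * \<beta>))))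
       = (\<Sum>c\<in>UNIV. v c) * (1 - p0) - w * (\<Sum>c\<in>UNIV. \<Sum>t\<in>UNIV. y c t / (2 * X t * \<beta>))"
    proof -
      have "v c * (1 - p0 - w * (\<Sum>t\<in>UNIV. y c t / (2 * v c * X t * \<beta>)))
          = v c * (1 - p0) - w * (\<Sum>t\<in>UNIV. y c t / (2 * X t * \<beta>))" for c
      proof -
        have "v c * (\<Sum>t\<in>UNIV. y c t / (2 * v c * X t * \<beta>)) = (\<Sum>t\<in>UNIV. y c t / (2 * X t * \<beta>))"
          unfolding sum_distrib_left using v_pos[of c] by (intro sum.cong) auto
        then show ?thesis by (simp add: algebra_simps)
      qed
      then show ?thesis by (simp add: sum_subtractf sum_distrib_left sum_distrib_right)
    qed
    also have "(\<Sum>c\<in>UNIV. \<Sum>t\<in>UNIV. y c t / (2 * X t * \<beta>)) = (\<Sum>t\<in>UNIV. s t y / (2 * X t * \<beta>))"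
      unfolding s_def sum_divide_distrib by (rule sum.swap)
    finally show ?thesis unfolding eq h_def using v_sum by simp
  qed
  have hint: "integrable FY h" unfolding h_def using sint by auto
  have gint: "integrable FY (\<lambda>y. \<integral>x. f x y \<partial>FX)" using PP.integrable_snd[OF fint] .
  have "(\<integral>y. h y \<partial>FY) \<le> payoff_X v FX FY"
    unfolding pay by (rule integral_mono_AE[OF hint gint]) (use nnY inner in \<open>auto elim: eventually_mono\<close>)
  moreover have "(\<integral>y. h y \<partial>FY) = (1 - p0) - w * (\<Sum>t\<in>UNIV. (\<integral>y. s t y \<partial>FY) / (2 * X t * \<beta>))"
    unfolding h_def using sint by (simp add: integral_diff integral_sum PY.prob_space)
  moreover have "(\<Sum>t\<in>UNIV. (\<integral>y. s t y \<partial>FY) / (2 * X t * \<beta>)) \<le> (\<Sum>t\<in>UNIV. Y t / (2 * X t * \<beta>))"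
    using sle X_pos b0 by (intro sum_mono divide_right_mono) (auto intro: less_imp_le)
  moreover have "(\<Sum>t\<in>UNIV. Y t / (2 * X t * \<beta>)) = \<alpha> / (2 * \<beta>)"
    unfolding \<alpha>_def sum_divide_distrib by (intro sum.cong) (auto simp: field_simps)
  moreover have "(1 - p0) - w * (\<alpha> / (2 * \<beta>)) = L \<alpha>"
    using a0 by (auto simp: p0_def w_def \<beta>_def L_def field_simps)
  ultimately have "payoff_X v FX FY \<ge> L \<alpha>"
    using w0 by (smt (verit, best) mult_left_mono)
  then show ?thesis using delta_part[OF a0] unfolding \<alpha>_def[symmetric] by (simp add: Let_def)
qed

end
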